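(* Let $p>0$ and let $\lambda,\mu$ be finite Borel measures on $\mathbb{S}^{n-1}$ such that $\lambda$ is absolutely continuous with respect to spherical Lebesgue measure, $\lambda(A)>0$ for every nonempty open set $A\subset\mathbb{S}^{n-1}$, and $\mu$ is not concentrated in any closed hemisphere of $\mathbb{S}^{n-1}$. Then there exists a convex body $K_0\in\mathcal{K}^n_0$ such that $$\sup\{\Phi_{\lambda,\mu,p}(\rho_K):K\in\mathcal{K}^n_0\}=\Phi_{\lambda,\mu,p}(\rho_{K_0}).$$
   Context: $\mathcal{K}^n_0$ is the set of compact convex subsets of $\mathbb{R}^n$ containing the origin in their interior; for $K\in\mathcal{K}^n_0$, $h_K(x)=\max_{y\in K}\langle y,x\rangle$ and $\rho_K(u)=\max\{t>0:tu\in K\}$. For a positive continuous function $f$ on $\mathbb{S}^{n-1}$, $\langle f\rangle=\mathrm{conv}\{f(u)u:u\in\mathbb{S}^{n-1}\}$. For a measure $\nu$, $|\nu|$ denotes its total mass. The functional is $$\Phi_{\lambda,\mu,p}(f)=-\frac{1}{|\lambda|}\int_{\mathbb{S}^{n-1}}\log h_{\langle f\rangle}(x)\,d\lambda(x)-\frac1p\log\Big(\frac{1}{|\mu|}\int_{\mathbb{S}^{n-1}}f^{-p}(u)\,d\mu(u)\Big).$$ *)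

theory Defs
  imports "HOL-Analysis.Analysis"
begin

definition convex_body0 :: "'a::euclidean_space set \<Rightarrow> bool" where
  "convex_body0 K \<longleftrightarrow> compact K \<and> convex K \<and> 0 \<in> interior K"

definition support_fun :: "'a::euclidean_space set \<Rightarrow> 'a \<Rightarrow> real" where
  "support_fun K x = Sup ((\<lambda>y. y \<bullet> x) ` K)"

definition radial_fun :: "'a::euclidean_space set \<Rightarrow> 'a \<Rightarrow> real" where
  "radial_fun K u = Sup {t. t > 0 \<and> t *\<^sub>R u \<in> K}"

definition hull_of :: "('a::euclidean_space \<Rightarrow> real) \<Rightarrow> 'a set" where
  "hull_of f = convex hull ((\<lambda>u. f u *\<^sub>R u) ` sphere 0 1)"

text \<open>Spherical Lebesgue measure, as a Borel measure on the ambient space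
  concentrated on the unit sphere: sigma(A) = n * Lebesgue measure of the cone
  {x in open unit ball : x / |x| in A}.\<close>
definition sphere_measure :: "'a::euclidean_space measure" where
  "sphere_measure =
     density (distr (restrict_space lborel (ball 0 1)) borel (\<lambda>x. x /\<^sub>R norm x))
             (\<lambda>_. ennreal (real DIM('a)))"

definition total_mass :: "'a measure \<Rightarrow> real" where
  "total_mass M = measure M (space M)"

definition Phi :: "'a::euclidean_space measure \<Rightarrow> 'a measure \<Rightarrow> real \<Rightarrow> ('a \<Rightarrow> real) \<Rightarrow> real" where
  "Phi lam mu p f =
     - (1 / total_mass lam) * (\<integral>x. ln (support_fun (hull_of f) x) \<partial>lam)
     - (1 / p) * ln ((1 / total_mass mu) * (\<integral>u. f u powr (- p) \<partial>mu))"

end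

theory Submission
  imports Defs "HOL-Complex_Analysis.Great_Picard"
begin

lemma support_max:
  fixes K :: "'a::euclidean_space set"
  assumes "compact K" "K \<noteq> {}"
  shows "\<exists>y\<in>K. support_fun K x = y \<bullet> x" and "\<And>y. y \<in> K \<Longrightarrow> y \<bullet> x \<le> support_fun K x"
proof -
  have c: "compact ((\<lambda>y. y \<bullet> x) ` K)"
    by (intro compact_continuous_image assms continuous_intros)
  obtain s where s: "s \<in> (\<lambda>y. y \<bullet> x) ` K" "\<forall>t\<in>(\<lambda>y. y \<bullet> x) ` K. t \<le> s"
    using compact_attains_sup[OF c] assms(2) by blast
  have eq: "support_fun K x = s"
    unfolding support_fun_def using s by (intro cSup_eq_maximum) auto
  show "\<exists>y\<in>K. support_fun K x = y \<bullet> x" using s eq by auto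
  show "\<And>y. y \<in> K \<Longrightarrow> y \<bullet> x \<le> support_fun K x" using s eq by auto
qed

lemma support_lip:
  fixes K :: "'a::euclidean_space set"
  assumes "compact K" "K \<noteq> {}" "K \<subseteq> cball 0 R"
  shows "support_fun K x - support_fun K x' \<le> R * norm (x - x')"
proof -
  obtain y where y: "y \<in> K" "support_fun K x = y \<bullet> x" using support_max[OF assms(1,2)] by blast
  have "y \<bullet> x = y \<bullet> x' + y \<bullet> (x - x')" by (simp add: inner_diff_right)
  also have "y \<bullet> (x - x') \<le> norm y * norm (x - x')" by (rule norm_cauchy_schwarz)
  also have "norm y * norm (x - x') \<le> R * norm (x - x')"
    using assms(3) y(1) by (intro mult_right_mono) auto
  finally show ?thesis using support_max(2)[OF assms(1,2) y(1), of x'] y(2) by linarith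
qed

lemma support_abs_lip:
  fixes K :: "'a::euclidean_space set"
  assumes "compact K" "K \<noteq> {}" "K \<subseteq> cball 0 R"
  shows "\<bar>support_fun K x - support_fun K x'\<bar> \<le> R * norm (x - x')"
  using support_lip[OF assms, of x x'] support_lip[OF assms, of x' x]
  by (simp add: norm_minus_commute)

lemma support_cont:
  fixes K :: "'a::euclidean_space set"
  assumes "compact K" "K \<noteq> {}"
  shows "continuous_on UNIV (support_fun K)"
proof -
  obtain R where R0: "R > 0" "\<forall>x\<in>K. norm x \<le> R"
    using compact_imp_bounded[OF assms(1)] bounded_pos by metis
  then have R: "K \<subseteq> cball 0 R" "R > 0" by (auto simp: subset_iff)
  have "R-lipschitz_on UNIV (support_fun K)"
  proof (rule lipschitz_onI)
    fix x y :: 'a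
    show "dist (support_fun K x) (support_fun K y) \<le> R * dist x y"
      using support_abs_lip[OF assms R(1), of x y] by (simp add: dist_real_def dist_norm)
  qed (use R in simp)
  then show ?thesis by (rule lipschitz_on_continuous_on)
qed

lemma cb_facts:
  fixes K :: "'a::euclidean_space set"
  assumes "convex_body0 K"
  shows "compact K" "convex K" "0 \<in> K" "K \<noteq> {}" "\<exists>e>0. ball 0 e \<subseteq> K" "\<exists>R>0. K \<subseteq> cball 0 R"
proof -
  show c: "compact K" "convex K" using assms by (auto simp: convex_body0_def)
  have i: "0 \<in> interior K" using assms by (auto simp: convex_body0_def)
  then show "0 \<in> K" using interior_subset by blast
  then show "K \<noteq> {}" by blast
  show "\<exists>e>0. ball 0 e \<subseteq> K" using i mem_interior by blast
  obtain R where R0: "R > 0" "\<forall>x\<in>K. norm x \<le> R"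
    using compact_imp_bounded[OF c(1)] bounded_pos by metis
  then show "\<exists>R>0. K \<subseteq> cball 0 R" by (auto simp: subset_iff)
qed

lemma radial_props:
  fixes K :: "'a::euclidean_space set"
  assumes "convex_body0 K" "x \<noteq> 0"
  shows "0 < radial_fun K x" "radial_fun K x *\<^sub>R x \<in> K"
    "\<And>a. a > 0 \<Longrightarrow> a \<le> radial_fun K x \<longleftrightarrow> a *\<^sub>R x \<in> K"
proof -
  define T where "T = {t. t > 0 \<and> t *\<^sub>R x \<in> K}"
  have rf: "radial_fun K x = Sup T" by (simp add: radial_fun_def T_def)
  obtain e where e: "e > 0" "ball 0 e \<subseteq> K" using cb_facts(5)[OF assms(1)] by blast
  obtain R where R: "R > 0" "K \<subseteq> cball 0 R" using cb_facts(6)[OF assms(1)] by blast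
  have nx: "norm x > 0" using assms(2) by simp
  define t0 where "t0 = e / (2 * norm x)"
  have t0: "t0 > 0" using e nx by (simp add: t0_def)
  have "norm (t0 *\<^sub>R x) < e" using e nx by (simp add: t0_def)
  then have "t0 \<in> T" using e t0 by (auto simp: T_def)
  then have ne: "T \<noteq> {}" by blast
  have bd: "\<And>t. t \<in> T \<Longrightarrow> t \<le> R / norm x"
  proof -
    fix t assume "t \<in> T"
    then have "t > 0" "norm (t *\<^sub>R x) \<le> R" using R by (auto simp: T_def)
    then show "t \<le> R / norm x" using nx by (simp add: field_simps)
  qed
  then have bdd: "bdd_above T" by (auto simp: bdd_above_def)
  have "t0 \<le> Sup T" using cSup_upper[OF \<open>t0 \<in> T\<close> bdd] .
  then show pos: "0 < radial_fun K x" using t0 rf by linarith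
  have "closed ((\<lambda>t::real. t *\<^sub>R x) -` K)"
    using cb_facts(1)[OF assms(1)]
    by (intro continuous_closed_vimage compact_imp_closed) (auto intro!: continuous_intros)
  moreover have "(\<lambda>t::real. t *\<^sub>R x) -` K = {t::real. t *\<^sub>R x \<in> K}" by auto
  ultimately have cl: "closed {t::real. t *\<^sub>R x \<in> K}" by simp
  have "T \<subseteq> {t. t *\<^sub>R x \<in> K}" by (auto simp: T_def)
  then have "closure T \<subseteq> {t. t *\<^sub>R x \<in> K}" using cl closure_minimal by blast
  then show mem: "radial_fun K x *\<^sub>R x \<in> K"
    using closure_contains_Sup[OF ne bdd] rf by auto
  show "\<And>a. a > 0 \<Longrightarrow> a \<le> radial_fun K x \<longleftrightarrow> a *\<^sub>R x \<in> K"
  proof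
    fix a :: real assume a: "a > 0" "a \<le> radial_fun K x"
    have "a *\<^sub>R x = (a / radial_fun K x) *\<^sub>R (radial_fun K x *\<^sub>R x) + (1 - a / radial_fun K x) *\<^sub>R 0"
      using pos by simp
    also have "\<dots> \<in> K"
      using a pos mem cb_facts(2,3)[OF assms(1)]
      by (intro convexD) auto
    finally show "a *\<^sub>R x \<in> K" .
  next
    fix a :: real assume "a > 0" "a *\<^sub>R x \<in> K"
    then have "a \<in> T" by (simp add: T_def)
    then show "a \<le> radial_fun K x" using cSup_upper[OF _ bdd] rf by simp
  qed
qed

lemma exists_unit: "\<exists>u::'a::euclidean_space. u \<in> sphere 0 1"
proof -
  obtain b :: 'a where "b \<in> Basis" using nonempty_Basis by blast
  then show ?thesis by (intro exI[of _ b]) simp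
qed

lemma hull_radial:
  fixes K :: "'a::euclidean_space set"
  assumes K: "convex_body0 K"
  shows "hull_of (radial_fun K) = K"
proof
  have "(\<lambda>u. radial_fun K u *\<^sub>R u) ` sphere 0 1 \<subseteq> K"
  proof
    fix z assume "z \<in> (\<lambda>u. radial_fun K u *\<^sub>R u) ` sphere 0 1"
    then obtain u where u: "u \<in> sphere (0::'a) 1" "z = radial_fun K u *\<^sub>R u" by blast
    then have "u \<noteq> 0" by auto
    then show "z \<in> K" using radial_props(2)[OF K] u by simp
  qed
  then show "hull_of (radial_fun K) \<subseteq> K"
    unfolding hull_of_def by (rule hull_minimal[where S=convex]) (rule cb_facts(2)[OF K])
next
  show "K \<subseteq> hull_of (radial_fun K)"
  proof
    fix x assume x: "x \<in> K"
    obtain u where u: "u \<in> sphere (0::'a) 1" "x = norm x *\<^sub>R u"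
    proof (cases "x = 0")
      case True
      obtain u :: 'a where "u \<in> sphere 0 1" using exists_unit by blast
      then show ?thesis using that[of u] True by simp
    next
      case False
      then show ?thesis using that[of "x /\<^sub>R norm x"] by simp
    qed
    have u0: "u \<noteq> 0" "-u \<noteq> 0" using u by auto
    define a where "a = radial_fun K u"
    define b where "b = radial_fun K (-u)"
    have a: "a > 0" and b: "b > 0" using radial_props(1)[OF K u0(1)] radial_props(1)[OF K u0(2)]
      by (auto simp: a_def b_def)
    have xa: "norm x \<le> a"
    proof (cases "x = 0")
      case True then show ?thesis using a by simp
    next
      case False
      then show ?thesis using radial_props(3)[OF K u0(1), of "norm x"] u x by (simp add: a_def)
    qed
    define s where "s = (norm x + b) / (a + b)"
    have s: "0 \<le> s" "s \<le> 1" using a b xa by (auto simp: s_def field_simps)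
    have "a *\<^sub>R u \<in> (\<lambda>u. radial_fun K u *\<^sub>R u) ` sphere 0 1"
      unfolding a_def using u(1) by (rule imageI)
    then have p1: "a *\<^sub>R u \<in> hull_of (radial_fun K)"
      unfolding hull_of_def by (rule hull_inc)
    have "-u \<in> sphere 0 1" using u(1) by simp
    then have "b *\<^sub>R (-u) \<in> (\<lambda>u. radial_fun K u *\<^sub>R u) ` sphere 0 1"
      unfolding b_def by (rule imageI)
    then have p2: "b *\<^sub>R (-u) \<in> hull_of (radial_fun K)"
      unfolding hull_of_def by (rule hull_inc)
    have ab: "a + b > 0" using a b by simp
    have oms: "1 - s = (a - norm x) / (a + b)"
    proof -
      have "1 - s = (a + b) / (a + b) - (norm x + b) / (a + b)" using ab by (simp add: s_def)
      also have "\<dots> = ((a + b) - (norm x + b)) / (a + b)" by (rule diff_divide_distrib[symmetric])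
      also have "\<dots> = (a - norm x) / (a + b)" by simp
      finally show ?thesis .
    qed
    have "s * a - (1 - s) * b = ((norm x + b) * a - (a - norm x) * b) / (a + b)"
      unfolding oms unfolding s_def times_divide_eq_left by (rule diff_divide_distrib[symmetric])
    also have "\<dots> = norm x * (a + b) / (a + b)" by (simp add: algebra_simps)
    finally have "s * a - (1 - s) * b = norm x" using ab by simp
    then have "x = s *\<^sub>R (a *\<^sub>R u) + (1 - s) *\<^sub>R (b *\<^sub>R (-u))"
    proof -
      have "s *\<^sub>R (a *\<^sub>R u) + (1 - s) *\<^sub>R (b *\<^sub>R (-u)) = (s * a) *\<^sub>R u - ((1 - s) * b) *\<^sub>R u"
        by (simp only: scaleR_scaleR scaleR_minus_right diff_conv_add_uminus)
      also have "\<dots> = (s * a - (1 - s) * b) *\<^sub>R u" by (rule scaleR_diff_left[symmetric])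
      finally have "s *\<^sub>R (a *\<^sub>R u) + (1 - s) *\<^sub>R (b *\<^sub>R (-u)) = (s * a - (1 - s) * b) *\<^sub>R u" .
      then show ?thesis using u(2) \<open>s * a - (1 - s) * b = norm x\<close> by simp
    qed
    also have "\<dots> \<in> hull_of (radial_fun K)"
      using p1 p2 s unfolding hull_of_def by (intro convexD[OF convex_convex_hull]) auto
    finally show "x \<in> hull_of (radial_fun K)" .
  qed
qed


lemma radial_meas:
  fixes K :: "'a::euclidean_space set"
  assumes K: "convex_body0 K"
  shows "radial_fun K \<in> borel_measurable borel"
proof -
  have "{w \<in> space borel. a \<le> radial_fun K w} \<in> sets borel" for a
  proof -
    define A where "A = {w::'a. w \<noteq> 0 \<and> a \<le> radial_fun K w}"
    define B where "B = {w::'a. w = 0 \<and> a \<le> radial_fun K w}"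
    have eq: "{w \<in> space borel. a \<le> radial_fun K w} = A \<union> B" by (auto simp: A_def B_def)
    have "B = {} \<or> B = {0}" by (auto simp: B_def)
    then have Bb: "B \<in> sets borel" by auto
    have Ab: "A \<in> sets borel"
    proof (cases "a > 0")
      case True
      have "A = (\<lambda>w. a *\<^sub>R w) -` K - {0}"
        using radial_props(3)[OF K _ True] by (auto simp: A_def)
      moreover have "closed ((\<lambda>w::'a. a *\<^sub>R w) -` K)"
        using cb_facts(1)[OF K]
        by (intro continuous_closed_vimage compact_imp_closed) (auto intro!: continuous_intros)
      ultimately show ?thesis by auto
    next
      case False
      have "A = - {0}"
        using radial_props(1)[OF K] False by (force simp: A_def)
      then show ?thesis by auto
    qed
    show ?thesis using eq Ab Bb by auto
  qed
  then show ?thesis by (simp add: borel_measurable_iff_ge)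
qed

lemma support_bounds:
  fixes K :: "'a::euclidean_space set"
  assumes K: "convex_body0 K"
  shows "\<exists>m R. 0 < m \<and> (\<forall>x\<in>sphere 0 1. m \<le> support_fun K x \<and> support_fun K x \<le> R)"
proof -
  obtain e where e: "e > 0" "ball 0 e \<subseteq> K" using cb_facts(5)[OF K] by blast
  obtain R where R: "R > 0" "K \<subseteq> cball 0 R" using cb_facts(6)[OF K] by blast
  have "\<forall>x\<in>sphere 0 1. e/2 \<le> support_fun K x \<and> support_fun K x \<le> R"
  proof
    fix x :: 'a assume x: "x \<in> sphere 0 1"
    have "(e/2) *\<^sub>R x \<in> K" using e x by (intro subsetD[OF e(2)]) auto
    then have "(e/2) *\<^sub>R x \<bullet> x \<le> support_fun K x"
      using support_max(2)[OF cb_facts(1,4)[OF K]] by blast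
    moreover have "(e/2) *\<^sub>R x \<bullet> x = e/2" using x by (simp add: inner_commute dot_square_norm)
    moreover obtain y where "y \<in> K" "support_fun K x = y \<bullet> x"
      using support_max(1)[OF cb_facts(1,4)[OF K]] by blast
    moreover have "y \<bullet> x \<le> norm y * norm x" by (rule norm_cauchy_schwarz)
    ultimately show "e/2 \<le> support_fun K x \<and> support_fun K x \<le> R"
      using R x by (auto simp: subset_iff)
  qed
  then show ?thesis using e by (intro exI[of _ "e/2"] exI[of _ R]) auto
qed

lemma radial_bounds:
  fixes K :: "'a::euclidean_space set"
  assumes K: "convex_body0 K"
  shows "\<exists>m R. 0 < m \<and> (\<forall>x\<in>sphere 0 1. m \<le> radial_fun K x \<and> radial_fun K x \<le> R)"
proof -
  obtain e where e: "e > 0" "ball 0 e \<subseteq> K" using cb_facts(5)[OF K] by blast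
  obtain R where R: "R > 0" "K \<subseteq> cball 0 R" using cb_facts(6)[OF K] by blast
  have "\<forall>x\<in>sphere 0 1. e/2 \<le> radial_fun K x \<and> radial_fun K x \<le> R"
  proof
    fix x :: 'a assume x: "x \<in> sphere 0 1"
    then have x0: "x \<noteq> 0" by auto
    have "(e/2) *\<^sub>R x \<in> K" using e x by (intro subsetD[OF e(2)]) auto
    then have 1: "e/2 \<le> radial_fun K x" using radial_props(3)[OF K x0, of "e/2"] e by simp
    have "radial_fun K x *\<^sub>R x \<in> cball 0 R" using radial_props(2)[OF K x0] R by auto
    then have "radial_fun K x \<le> R" using x radial_props(1)[OF K x0] by simp
    then show "e/2 \<le> radial_fun K x \<and> radial_fun K x \<le> R" using 1 by simp
  qed
  then show ?thesis using e by (intro exI[of _ "e/2"] exI[of _ R]) auto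
qed

lemma AE_sphere:
  fixes N :: "'a::euclidean_space measure"
  assumes "sets N = sets borel" "emeasure N (- sphere 0 1) = 0"
  shows "AE x in N. x \<in> sphere 0 1"
proof (rule AE_I'[of "- sphere 0 1"])
  have "- sphere (0::'a) 1 \<in> sets borel" by (intro borel_open) auto
  then show "- sphere (0::'a) 1 \<in> null_sets N" using assms by (simp add: null_sets_def)
qed auto

lemma meas_N:
  fixes N :: "'a::euclidean_space measure"
  assumes "sets N = sets borel" "f \<in> borel_measurable borel"
  shows "f \<in> borel_measurable N"
  using assms measurable_cong_sets[OF assms(1) refl] by simp

lemma integrable_sphere:
  fixes N :: "'a::euclidean_space measure" and f :: "'a \<Rightarrow> real"
  assumes "sets N = sets borel" "finite_measure N" "emeasure N (- sphere 0 1) = 0"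
    "f \<in> borel_measurable borel" "\<And>x. x \<in> sphere 0 1 \<Longrightarrow> \<bar>f x\<bar> \<le> B"
  shows "integrable N f"
proof (rule finite_measure.integrable_const_bound[OF assms(2)])
  show "AE x in N. norm (f x) \<le> B"
    using AE_sphere[OF assms(1,3)] by eventually_elim (use assms(5) in auto)
  show "f \<in> borel_measurable N" using meas_N[OF assms(1,4)] .
qed

lemma cap_sets: "{u \<in> sphere (0::'a::euclidean_space) 1. d < u \<bullet> z} \<in> sets borel"
proof -
  have "{u \<in> sphere (0::'a) 1. d < u \<bullet> z} = sphere 0 1 \<inter> {u. d < z \<bullet> u}"
    by (auto simp: inner_commute)
  moreover have "sphere (0::'a) 1 \<inter> {u. d < z \<bullet> u} \<in> sets borel"
    by (intro sets.Int borel_closed borel_open open_halfspace_gt) auto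
  ultimately show ?thesis by simp
qed

lemma int_ln_support:
  fixes N :: "'a::euclidean_space measure"
  assumes "sets N = sets borel" "finite_measure N" "emeasure N (- sphere 0 1) = 0"
    and K: "convex_body0 K"
  shows "integrable N (\<lambda>x. ln (support_fun K x))"
proof -
  obtain m R where mR: "0 < m" "\<forall>x\<in>sphere 0 1. m \<le> support_fun K x \<and> support_fun K x \<le> R"
    using support_bounds[OF K] by blast
  show ?thesis
  proof (rule integrable_sphere[OF assms(1-3)])
    show "(\<lambda>x. ln (support_fun K x)) \<in> borel_measurable borel"
      by (intro borel_measurable_ln borel_measurable_continuous_onI support_cont cb_facts[OF K])
    fix x :: 'a assume x: "x \<in> sphere 0 1"
    then have "m \<le> support_fun K x" "support_fun K x \<le> R" using mR by auto
    then have "ln m \<le> ln (support_fun K x)" "ln (support_fun K x) \<le> ln R"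
      using mR(1) by auto
    then show "\<bar>ln (support_fun K x)\<bar> \<le> \<bar>ln m\<bar> + \<bar>ln R\<bar>" by linarith
  qed
qed

lemma int_radial:
  fixes N :: "'a::euclidean_space measure"
  assumes "sets N = sets borel" "finite_measure N" "emeasure N (- sphere 0 1) = 0"
    and K: "convex_body0 K" and p: "p > 0"
  shows "integrable N (\<lambda>x. radial_fun K x powr (-p))"
proof -
  obtain m R where mR: "0 < m" "\<forall>x\<in>sphere 0 1. m \<le> radial_fun K x \<and> radial_fun K x \<le> R"
    using radial_bounds[OF K] by blast
  show ?thesis
  proof (rule integrable_sphere[OF assms(1-3)])
    show "(\<lambda>x. radial_fun K x powr (-p)) \<in> borel_measurable borel"
      using radial_meas[OF K] by measurable
    fix x :: 'a assume x: "x \<in> sphere 0 1"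
    then have "m \<le> radial_fun K x" using mR by auto
    then have "radial_fun K x powr (-p) \<le> m powr (-p)"
      using mR(1) p by (intro powr_mono2') auto
    then show "\<bar>radial_fun K x powr (-p)\<bar> \<le> m powr (-p)" by simp
  qed
qed

lemma Phi_radial:
  assumes "convex_body0 K"
  shows "Phi lam mu p (radial_fun K) =
     - (1 / total_mass lam) * (\<integral>x. ln (support_fun K x) \<partial>lam)
     - (1 / p) * ln ((1 / total_mass mu) * (\<integral>u. radial_fun K u powr (- p) \<partial>mu))"
  unfolding Phi_def hull_radial[OF assms] ..

lemma cap_uniform:
  fixes N :: "'a::euclidean_space measure"
  assumes sets: "sets N = sets borel" and fin: "finite_measure N"
    and pos: "\<And>w. w \<in> sphere 0 1 \<Longrightarrow> \<exists>s>0. measure N {u \<in> sphere 0 1. 2 * s < u \<bullet> w} > 0"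
  shows "\<exists>d>0. \<exists>c>0. \<forall>z \<in> sphere 0 1. c \<le> measure N {u \<in> sphere 0 1. d < u \<bullet> z}"
proof -
  obtain s where s: "\<And>w. w \<in> sphere 0 1 \<Longrightarrow> s w > 0 \<and> measure N {u \<in> sphere 0 1. 2 * s w < u \<bullet> w} > 0"
    using pos by metis
  have cov: "sphere 0 1 \<subseteq> (\<Union>w\<in>sphere 0 1. ball w (s w))"
  proof
    fix z :: 'a assume "z \<in> sphere 0 1"
    then have "z \<in> ball z (s z)" using s by auto
    then show "z \<in> (\<Union>w\<in>sphere 0 1. ball w (s w))" using \<open>z \<in> sphere 0 1\<close> by blast
  qed
  obtain F where F: "F \<subseteq> sphere 0 1" "finite F" "sphere 0 1 \<subseteq> (\<Union>w\<in>F. ball w (s w))"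
    using compactE_image[OF compact_sphere, of "sphere 0 1" "\<lambda>w. ball w (s w)"] cov by blast
  have Fne: "F \<noteq> {}" using F(3) exists_unit by blast
  define d where "d = Min (s ` F)"
  define c where "c = Min ((\<lambda>w. measure N {u \<in> sphere 0 1. 2 * s w < u \<bullet> w}) ` F)"
  have d: "d > 0" unfolding d_def using F s Fne by (subst Min_gr_iff) auto
  have c: "c > 0" unfolding c_def using F s Fne by (subst Min_gr_iff) auto
  have "\<forall>z \<in> sphere 0 1. c \<le> measure N {u \<in> sphere 0 1. d < u \<bullet> z}"
  proof
    fix z :: 'a assume z: "z \<in> sphere 0 1"
    then obtain w where w: "w \<in> F" "z \<in> ball w (s w)" using F(3) by blast
    have sub: "{u \<in> sphere 0 1. 2 * s w < u \<bullet> w} \<subseteq> {u \<in> sphere 0 1. d < u \<bullet> z}"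
    proof
      fix u :: 'a assume u: "u \<in> {u \<in> sphere 0 1. 2 * s w < u \<bullet> w}"
      have "u \<bullet> (w - z) \<le> norm u * norm (w - z)" by (rule norm_cauchy_schwarz)
      then have "u \<bullet> (w - z) < s w" using u w by (auto simp: dist_norm)
      moreover have "u \<bullet> z = u \<bullet> w - u \<bullet> (w - z)" by (simp add: inner_diff_right)
      moreover have "d \<le> s w" unfolding d_def using F w by (intro Min_le) auto
      ultimately show "u \<in> {u \<in> sphere 0 1. d < u \<bullet> z}" using u by auto
    qed
    have "c \<le> measure N {u \<in> sphere 0 1. 2 * s w < u \<bullet> w}"
      unfolding c_def using F w by (intro Min_le) auto
    also have "\<dots> \<le> measure N {u \<in> sphere 0 1. d < u \<bullet> z}"
      using sub cap_sets[of d z] sets by (intro finite_measure.finite_measure_mono[OF fin]) auto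
    finally show "c \<le> measure N {u \<in> sphere 0 1. d < u \<bullet> z}" .
  qed
  then show ?thesis using c d by blast
qed

lemma cap_lam:
  fixes N :: "'a::euclidean_space measure"
  assumes sets: "sets N = sets borel" and fin: "finite_measure N"
    and pos: "\<And>A. openin (top_of_set (sphere 0 1)) A \<Longrightarrow> A \<noteq> {} \<Longrightarrow> emeasure N A > 0"
  shows "\<exists>d>0. \<exists>c>0. \<forall>z \<in> sphere 0 1. c \<le> measure N {u \<in> sphere 0 1. d < u \<bullet> z}"
proof (rule cap_uniform[OF sets fin])
  fix w :: 'a assume w: "w \<in> sphere 0 1"
  have eq: "{u \<in> sphere 0 1. 2 * (1/4) < u \<bullet> w} = sphere 0 1 \<inter> {u. 1/2 < w \<bullet> u}"
    by (auto simp: inner_commute)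
  have "openin (top_of_set (sphere 0 1)) (sphere 0 1 \<inter> {u. 1/2 < w \<bullet> u})"
    by (intro openin_open_Int open_halfspace_gt)
  moreover have "w \<in> sphere 0 1 \<inter> {u. 1/2 < w \<bullet> u}" using w by (auto simp: dot_square_norm)
  ultimately have "emeasure N {u \<in> sphere 0 1. 2 * (1/4) < u \<bullet> w} > 0"
    unfolding eq using pos by blast
  then have "measure N {u \<in> sphere 0 1. 2 * (1/4) < u \<bullet> w} > 0"
    by (simp add: finite_measure.emeasure_eq_measure[OF fin])
  then show "\<exists>s>0. measure N {u \<in> sphere 0 1. 2 * s < u \<bullet> w} > 0"
    by (intro exI[of _ "1/4"]) auto
qed

lemma cap_mu:
  fixes N :: "'a::euclidean_space measure"
  assumes sets: "sets N = sets borel" and fin: "finite_measure N"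
    and pos: "\<And>v. v \<in> sphere 0 1 \<Longrightarrow> emeasure N {u \<in> sphere 0 1. u \<bullet> v < 0} > 0"
  shows "\<exists>d>0. \<exists>c>0. \<forall>z \<in> sphere 0 1. c \<le> measure N {u \<in> sphere 0 1. d < u \<bullet> z}"
proof (rule cap_uniform[OF sets fin])
  fix w :: 'a assume w: "w \<in> sphere 0 1"
  show "\<exists>s>0. measure N {u \<in> sphere 0 1. 2 * s < u \<bullet> w} > 0"
  proof (rule ccontr)
    assume "\<not> ?thesis"
    then have z: "measure N {u \<in> sphere 0 1. 2 * s < u \<bullet> w} = 0" if "s > 0" for s
      using that measure_nonneg[of N] by (meson linorder_neqE_linordered_idom not_less)
    define A where "A = (\<lambda>n::nat. {u \<in> sphere (0::'a) 1. 2 * (1 / (2 * real (Suc n))) < u \<bullet> w})"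
    have "A n \<in> null_sets N" for n
    proof -
      have "A n \<in> sets N" using cap_sets sets by (simp add: A_def)
      moreover have "measure N (A n) = 0" unfolding A_def by (rule z) simp
      ultimately show ?thesis
        by (simp add: finite_measure.emeasure_eq_measure[OF fin] null_sets_def)
    qed
    then have nul: "(\<Union>n. A n) \<in> null_sets N" by (rule null_sets_UN)
    have "{u \<in> sphere 0 1. u \<bullet> (-w) < 0} \<subseteq> (\<Union>n. A n)"
    proof
      fix u assume u: "u \<in> {u \<in> sphere (0::'a) 1. u \<bullet> (-w) < 0}"
      then have "0 < u \<bullet> w" by simp
      then obtain n where "inverse (real (Suc n)) < u \<bullet> w" using reals_Archimedean by blast
      then have "u \<in> A n" using u by (simp add: A_def field_simps)
      then show "u \<in> (\<Union>n. A n)" by blast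
    qed
    then have "emeasure N {u \<in> sphere 0 1. u \<bullet> (-w) < 0} = 0"
      using nul null_sets_subset[OF nul] cap_sets sets
      by (meson emeasure_eq_0 null_setsD1 null_setsD2 sets.sets_into_space)
    moreover have "-w \<in> sphere 0 1" using w by simp
    ultimately show False using pos by fastforce
  qed
qed

lemma space_borel_eq:
  assumes "sets N = sets (borel :: 'a::euclidean_space measure)"
  shows "space N = UNIV"
  using sets_eq_imp_space_eq[OF assms] by simp

lemma integral_step:
  fixes N :: "'a::euclidean_space measure"
  assumes sets: "sets N = sets borel" and fin: "finite_measure N" and nul: "emeasure N (- sphere 0 1) = 0"
    and C: "C \<in> sets borel"
  shows "integrable N (\<lambda>x. a + b * indicator C x)"
    "(\<integral>x. a + b * indicator C x \<partial>N) = a * measure N (space N) + b * measure N C"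
proof -
  have i1: "integrable N (\<lambda>x. b * indicator C x :: real)"
    by (rule integrable_sphere[OF sets fin nul, where B="\<bar>b\<bar>"]) (use C in \<open>auto simp: indicator_def\<close>)
  have i0: "integrable N (\<lambda>x. a)" by (rule finite_measure.integrable_const[OF fin])
  show "integrable N (\<lambda>x. a + b * indicator C x)" using i0 i1 by simp
  have "(\<integral>x. a + b * indicator C x \<partial>N) = (\<integral>x. a \<partial>N) + (\<integral>x. b * indicator C x \<partial>N)"
    by (rule Bochner_Integration.integral_add[OF i0 i1])
  also have "\<dots> = a * measure N (space N) + b * measure N C"
    using space_borel_eq[OF sets] by (simp add: integral_mult_right_zero)
  finally show "(\<integral>x. a + b * indicator C x \<partial>N) = a * measure N (space N) + b * measure N C" .
qed

lemma Phi_bound: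
  fixes lam mu :: "'a::euclidean_space measure" and K :: "'a set"
  assumes sl: "sets lam = sets borel" and sm: "sets mu = sets borel"
    and fl: "finite_measure lam" and fm: "finite_measure mu"
    and nl: "emeasure lam (- sphere 0 1) = 0" and nm: "emeasure mu (- sphere 0 1) = 0"
    and p: "p > 0"
    and t: "t > 0" and c1: "c1 > 0"
    and capl: "\<forall>z\<in>sphere 0 1. c1 \<le> measure lam {u \<in> sphere 0 1. t < u \<bullet> z}"
    and dl: "d > 0" and c2: "c2 > 0"
    and capm: "\<forall>z\<in>sphere 0 1. c2 \<le> measure mu {u \<in> sphere 0 1. d < u \<bullet> z}"
    and K: "convex_body0 K"
    and y0: "y0 \<in> K" "y0 \<noteq> 0"
    and w0: "w0 \<in> sphere 0 1" "\<forall>x\<in>sphere 0 1. support_fun K w0 \<le> support_fun K x"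
  shows "Phi lam mu p (radial_fun K) \<le> (-(1/p) * ln (c2 / total_mass mu) - ln d)
      + ln (support_fun K w0) - ln (min (support_fun K w0) (norm y0 * t))
      - (c1 / total_mass lam) * (ln (norm y0 * t) - ln (min (support_fun K w0) (norm y0 * t)))"
proof -
  define h where "h = support_fun K"
  define r where "r = h w0"
  define R where "R = norm y0"
  define m where "m = min r (R * t)"
  define L where "L = total_mass lam"
  define M where "M = total_mass mu"
  define S where "S = sphere (0::'a) 1"
  have R: "R > 0" using y0 by (simp add: R_def)
  obtain m0 R0 where mR: "0 < m0" "\<forall>x\<in>sphere 0 1. m0 \<le> support_fun K x \<and> support_fun K x \<le> R0"
    using support_bounds[OF K] by blast
  have "m0 \<le> support_fun K w0" using mR w0(1) by blast
  then have r: "r > 0" using mR(1) by (simp add: r_def h_def)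
  have m: "m > 0" "m \<le> r" "m \<le> R * t" using r R t by (auto simp: m_def)
  define yh where "yh = y0 /\<^sub>R R"
  have yh: "yh \<in> S" using R by (simp add: yh_def S_def R_def)
  define C where "C = {u \<in> S. t < u \<bullet> yh}"
  have Cs: "C \<in> sets borel" unfolding C_def S_def by (rule cap_sets)
  have mC: "c1 \<le> measure lam C" using capl yh by (simp add: C_def S_def)
  have L: "L \<ge> c1" unfolding L_def total_mass_def
    using mC finite_measure.bounded_measure[OF fl, of C] by linarith
  have Lp: "L > 0" using L c1 by linarith
  have spl: "space lam = UNIV" using space_borel_eq[OF sl] .
  have spm: "space mu = UNIV" using space_borel_eq[OF sm] .
  define b where "b = ln (R * t) - ln m"
  have b: "b \<ge> 0" using m R t by (simp add: b_def)
  have pw1: "ln m + b * indicator C x \<le> ln (h x)" if x: "x \<in> S" for x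
  proof -
    have hx: "r \<le> h x" using w0 x by (simp add: r_def h_def S_def)
    show ?thesis
    proof (cases "x \<in> C")
      case True
      then have "t < x \<bullet> yh" by (simp add: C_def)
      then have "R * t < R * (x \<bullet> yh)" using R by simp
      also have "R * (x \<bullet> yh) = y0 \<bullet> x" using R by (simp add: yh_def R_def inner_commute)
      also have "y0 \<bullet> x \<le> h x" unfolding h_def by (rule support_max(2)[OF cb_facts(1,4)[OF K] y0(1)])
      finally have "R * t < h x" .
      then have "ln (R * t) \<le> ln (h x)" using R t by (intro ln_mono) auto
      then show ?thesis using True by (simp add: b_def)
    next
      case False
      have "ln m \<le> ln (h x)" using m hx by simp
      then show ?thesis using False by simp
    qed
  qed
  have I1: "L * ln m + c1 * b \<le> (\<integral>x. ln (h x) \<partial>lam)"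
  proof -
    have "L * ln m + c1 * b \<le> ln m * measure lam (space lam) + b * measure lam C"
      using mC b by (simp add: L_def total_mass_def mult.commute mult_left_mono)
    also have "\<dots> = (\<integral>x. ln m + b * indicator C x \<partial>lam)"
      by (rule integral_step(2)[OF sl fl nl Cs, symmetric])
    also have "\<dots> \<le> (\<integral>x. ln (h x) \<partial>lam)"
    proof (rule integral_mono_AE)
      show "integrable lam (\<lambda>x. ln m + b * indicator C x)" using integral_step(1)[OF sl fl nl Cs] .
      show "integrable lam (\<lambda>x. ln (h x))" unfolding h_def using int_ln_support[OF sl fl nl K] .
      show "AE x in lam. ln m + b * indicator C x \<le> ln (h x)"
        using AE_sphere[OF sl nl] by eventually_elim (use pw1 S_def in auto)
    qed
    finally show ?thesis .
  qed
  have T1: "- (1 / L) * (\<integral>x. ln (h x) \<partial>lam) \<le> - ln m - (c1 / L) * b"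
  proof -
    have "- (1 / L) * (\<integral>x. ln (h x) \<partial>lam) \<le> - (1 / L) * (L * ln m + c1 * b)"
      using I1 Lp by (intro mult_left_mono_neg) auto
    also have "\<dots> = - ln m - (c1 / L) * b" using Lp by (simp add: field_simps)
    finally show ?thesis .
  qed
  define D where "D = {u \<in> S. d < u \<bullet> w0}"
  have Ds: "D \<in> sets borel" unfolding D_def S_def by (rule cap_sets)
  have mD: "c2 \<le> measure mu D" using capm w0 by (simp add: D_def S_def)
  define k where "k = (r / d) powr (-p)"
  have k: "k > 0" using r dl by (simp add: k_def)
  have pw2: "0 + k * indicator D u \<le> radial_fun K u powr (-p)" if u: "u \<in> S" for u
  proof (cases "u \<in> D")
    case True
    then have ud: "d < u \<bullet> w0" by (simp add: D_def)
    have u0: "u \<noteq> 0" using u by (auto simp: S_def)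
    have "(radial_fun K u *\<^sub>R u) \<bullet> w0 \<le> r"
      unfolding r_def h_def by (rule support_max(2)[OF cb_facts(1,4)[OF K] radial_props(2)[OF K u0]])
    then have le: "radial_fun K u * (u \<bullet> w0) \<le> r" by simp
    have rp: "radial_fun K u > 0" using radial_props(1)[OF K u0] .
    have "radial_fun K u * d \<le> radial_fun K u * (u \<bullet> w0)" using rp ud by simp
    then have "radial_fun K u * d \<le> r" using le by linarith
    then have "radial_fun K u \<le> r / d" using dl by (simp add: field_simps)
    then have "k \<le> radial_fun K u powr (-p)" unfolding k_def
      using rp p by (intro powr_mono2') auto
    then show ?thesis using True by simp
  next
    case False
    then show ?thesis by simp
  qed
  have I2: "k * c2 \<le> (\<integral>u. radial_fun K u powr (-p) \<partial>mu)"
  proof -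
    have "k * c2 \<le> 0 * measure mu (space mu) + k * measure mu D"
      using mD k by simp
    also have "\<dots> = (\<integral>x. 0 + k * indicator D x \<partial>mu)"
      by (rule integral_step(2)[OF sm fm nm Ds, symmetric])
    also have "\<dots> \<le> (\<integral>u. radial_fun K u powr (-p) \<partial>mu)"
    proof (rule integral_mono_AE)
      show "integrable mu (\<lambda>x. 0 + k * indicator D x)" using integral_step(1)[OF sm fm nm Ds] .
      show "integrable mu (\<lambda>x. radial_fun K x powr (-p))" using int_radial[OF sm fm nm K p] .
      show "AE x in mu. 0 + k * indicator D x \<le> radial_fun K x powr (-p)"
        using AE_sphere[OF sm nm] by eventually_elim (use pw2 S_def in auto)
    qed
    finally show ?thesis .
  qed
  have M: "M \<ge> c2" unfolding M_def total_mass_def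
    using mD finite_measure.bounded_measure[OF fm, of D] by linarith
  have Mp: "M > 0" using M c2 by linarith
  have T2: "- (1 / p) * ln ((1 / M) * (\<integral>u. radial_fun K u powr (-p) \<partial>mu))
      \<le> -(1/p) * ln (c2 / M) - ln d + ln r"
  proof -
    have pos: "0 < (1 / M) * (k * c2)" using Mp k c2 by simp
    have le2: "(1 / M) * (k * c2) \<le> (1 / M) * (\<integral>u. radial_fun K u powr (-p) \<partial>mu)"
      using I2 Mp by (intro mult_left_mono) auto
    have "ln ((1 / M) * (k * c2)) \<le> ln ((1 / M) * (\<integral>u. radial_fun K u powr (-p) \<partial>mu))"
      using pos le2 by (intro ln_mono) auto
    moreover have "ln ((1 / M) * (k * c2)) = ln (c2 / M) + ln k"
      using Mp k c2 by (simp add: ln_mult ln_div)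
    moreover have "ln k = -p * (ln r - ln d)"
      using r dl by (simp add: k_def ln_powr ln_div)
    ultimately have "ln (c2 / M) - p * (ln r - ln d) \<le> ln ((1 / M) * (\<integral>u. radial_fun K u powr (-p) \<partial>mu))"
      by simp
    then have "- (1 / p) * ln ((1 / M) * (\<integral>u. radial_fun K u powr (-p) \<partial>mu))
        \<le> - (1 / p) * (ln (c2 / M) - p * (ln r - ln d))"
      using p by (intro mult_left_mono_neg) auto
    also have "\<dots> = -(1/p) * ln (c2 / M) - ln d + ln r" using p by (simp add: field_simps)
    finally show ?thesis .
  qed
  show ?thesis
    unfolding Phi_radial[OF K]
    using T1 T2 unfolding h_def L_def M_def b_def m_def r_def R_def by linarith
qed

lemma body_data:
  fixes K :: "'a::euclidean_space set"
  assumes K: "convex_body0 K"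
  shows "\<exists>y0 w0. y0 \<in> K \<and> y0 \<noteq> 0 \<and> (\<forall>y\<in>K. norm y \<le> norm y0) \<and> w0 \<in> sphere 0 1
     \<and> (\<forall>x\<in>sphere 0 1. support_fun K w0 \<le> support_fun K x) \<and> 0 < support_fun K w0
     \<and> (\<forall>x\<in>sphere 0 1. support_fun K x \<le> norm y0)"
proof -
  have c: "compact (norm ` K)" by (intro compact_continuous_image cb_facts[OF K] continuous_intros)
  obtain s where s: "s \<in> norm ` K" "\<forall>t\<in>norm ` K. t \<le> s"
    using compact_attains_sup[OF c] cb_facts(4)[OF K] by blast
  then obtain y0 where y0: "y0 \<in> K" "\<forall>y\<in>K. norm y \<le> norm y0" by auto
  obtain e where e: "e > 0" "ball 0 e \<subseteq> K" using cb_facts(5)[OF K] by blast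
  obtain u :: 'a where u: "u \<in> sphere 0 1" using exists_unit by blast
  have "(e/2) *\<^sub>R u \<in> K" using e u by (intro subsetD[OF e(2)]) auto
  then have "norm ((e/2) *\<^sub>R u) \<le> norm y0" using y0 by blast
  then have y00: "y0 \<noteq> 0" using e u by auto
  obtain w0 where w0: "w0 \<in> sphere 0 1" "\<forall>x\<in>sphere 0 1. support_fun K w0 \<le> support_fun K x"
    using continuous_attains_inf[OF compact_sphere _ continuous_on_subset[OF support_cont[OF cb_facts(1,4)[OF K]]]]
      u by blast
  obtain m0 R0 where mR: "0 < m0" "\<forall>x\<in>sphere 0 1. m0 \<le> support_fun K x \<and> support_fun K x \<le> R0"
    using support_bounds[OF K] by blast
  have "m0 \<le> support_fun K w0" using mR w0(1) by blast
  then have pos: "0 < support_fun K w0" using mR(1) by linarith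
  have up: "\<forall>x\<in>sphere 0 1. support_fun K x \<le> norm y0"
  proof
    fix x :: 'a assume x: "x \<in> sphere 0 1"
    obtain y where y: "y \<in> K" "support_fun K x = y \<bullet> x" using support_max(1)[OF cb_facts(1,4)[OF K]] by blast
    have "y \<bullet> x \<le> norm y * norm x" by (rule norm_cauchy_schwarz)
    then show "support_fun K x \<le> norm y0" using y y0 x by auto
  qed
  show ?thesis using y0 y00 w0 pos up by blast
qed

lemma int_radial_pos:
  fixes N :: "'a::euclidean_space measure"
  assumes "sets N = sets borel" "finite_measure N" "emeasure N (- sphere 0 1) = 0"
    and K: "convex_body0 K" and p: "p > 0" and Mp: "measure N (space N) > 0"
  shows "0 < (\<integral>x. radial_fun K x powr (-p) \<partial>N)"
proof -
  obtain m R where mR: "0 < m" "\<forall>x\<in>sphere 0 1. m \<le> radial_fun K x \<and> radial_fun K x \<le> R"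
    using radial_bounds[OF K] by blast
  have R: "R > 0" using mR exists_unit by (metis order.strict_trans2)
  have "0 < measure N (space N) * R powr (-p)" using Mp R by simp
  also have "\<dots> = (\<integral>x. R powr (-p) \<partial>N)" by simp
  also have "\<dots> \<le> (\<integral>x. radial_fun K x powr (-p) \<partial>N)"
  proof (rule integral_mono_AE)
    show "integrable N (\<lambda>x. R powr (-p))" by (rule finite_measure.integrable_const[OF assms(2)])
    show "integrable N (\<lambda>x. radial_fun K x powr (-p))" by (rule int_radial[OF assms(1-3) K p])
    show "AE x in N. R powr (-p) \<le> radial_fun K x powr (-p)"
      using AE_sphere[OF assms(1,3)]
    proof eventually_elim
      case (elim x)
      then have "m \<le> radial_fun K x" "radial_fun K x \<le> R" using mR by auto
      then show ?case using mR(1) p by (intro powr_mono2') auto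
    qed
  qed
  finally show ?thesis .
qed

lemma Phi_compare:
  fixes lam mu :: "'a::euclidean_space measure" and K1 K2 :: "'a set"
  assumes sl: "sets lam = sets borel" and sm: "sets mu = sets borel"
    and fl: "finite_measure lam" and fm: "finite_measure mu"
    and nl: "emeasure lam (- sphere 0 1) = 0" and nm: "emeasure mu (- sphere 0 1) = 0"
    and p: "p > 0" and Lp: "total_mass lam > 0" and Mp: "total_mass mu > 0"
    and K1: "convex_body0 K1" and K2: "convex_body0 K2"
    and a: "\<alpha> > 0" and b: "\<beta> > 0"
    and hh: "\<forall>x\<in>sphere 0 1. \<alpha> * support_fun K2 x \<le> support_fun K1 x"
    and rr: "\<forall>u\<in>sphere 0 1. radial_fun K1 u \<le> \<beta> * radial_fun K2 u"
  shows "Phi lam mu p (radial_fun K1) \<le> Phi lam mu p (radial_fun K2) - ln \<alpha> + ln \<beta>"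
proof -
  define L where "L = total_mass lam"
  define M where "M = total_mass mu"
  have spl: "space lam = UNIV" using space_borel_eq[OF sl] .
  define I1 where "I1 = (\<integral>x. ln (support_fun K1 x) \<partial>lam)"
  define J1 where "J1 = (\<integral>x. ln (support_fun K2 x) \<partial>lam)"
  define I2 where "I2 = (\<integral>x. radial_fun K1 x powr (-p) \<partial>mu)"
  define J2 where "J2 = (\<integral>x. radial_fun K2 x powr (-p) \<partial>mu)"
  obtain m2 R2 where mR2: "0 < m2" "\<forall>x\<in>sphere 0 1. m2 \<le> support_fun K2 x \<and> support_fun K2 x \<le> R2"
    using support_bounds[OF K2] by blast
  have iJ1: "integrable lam (\<lambda>x. ln (support_fun K2 x))" by (rule int_ln_support[OF sl fl nl K2])
  have "L * ln \<alpha> + J1 = (\<integral>x. ln \<alpha> \<partial>lam) + J1"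
    by (simp add: L_def total_mass_def)
  also have "\<dots> = (\<integral>x. ln \<alpha> + ln (support_fun K2 x) \<partial>lam)"
    unfolding J1_def by (rule Bochner_Integration.integral_add[symmetric, OF finite_measure.integrable_const[OF fl] iJ1])
  also have "\<dots> \<le> I1" unfolding I1_def
  proof (rule integral_mono_AE)
    show "integrable lam (\<lambda>x. ln \<alpha> + ln (support_fun K2 x))"
      by (rule Bochner_Integration.integrable_add[OF finite_measure.integrable_const[OF fl] iJ1])
    show "integrable lam (\<lambda>x. ln (support_fun K1 x))" by (rule int_ln_support[OF sl fl nl K1])
    show "AE x in lam. ln \<alpha> + ln (support_fun K2 x) \<le> ln (support_fun K1 x)"
      using AE_sphere[OF sl nl]
    proof eventually_elim
      case (elim x)
      have h2: "support_fun K2 x > 0" using mR2 elim by (meson order.strict_trans2)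
      have "ln \<alpha> + ln (support_fun K2 x) = ln (\<alpha> * support_fun K2 x)" using a h2 by (simp add: ln_mult)
      also have "\<dots> \<le> ln (support_fun K1 x)" using hh elim a h2 by (intro ln_mono) auto
      finally show ?case .
    qed
  qed
  finally have E1: "L * ln \<alpha> + J1 \<le> I1" .
  have J2p: "J2 > 0" unfolding J2_def
    by (rule int_radial_pos[OF sm fm nm K2 p]) (use Mp in \<open>simp add: total_mass_def\<close>)
  have "\<beta> powr (-p) * J2 = (\<integral>x. \<beta> powr (-p) * radial_fun K2 x powr (-p) \<partial>mu)"
    unfolding J2_def by (simp add: integral_mult_right_zero)
  also have "\<dots> \<le> I2" unfolding I2_def
  proof (rule integral_mono_AE)
    show "integrable mu (\<lambda>x. \<beta> powr (-p) * radial_fun K2 x powr (-p))"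
      using int_radial[OF sm fm nm K2 p] by simp
    show "integrable mu (\<lambda>x. radial_fun K1 x powr (-p))" by (rule int_radial[OF sm fm nm K1 p])
    show "AE x in mu. \<beta> powr (-p) * radial_fun K2 x powr (-p) \<le> radial_fun K1 x powr (-p)"
      using AE_sphere[OF sm nm]
    proof eventually_elim
      case (elim x)
      then have x0: "x \<noteq> 0" by auto
      have r1: "radial_fun K1 x > 0" using radial_props(1)[OF K1 x0] .
      have r2: "radial_fun K2 x > 0" using radial_props(1)[OF K2 x0] .
      have "\<beta> powr (-p) * radial_fun K2 x powr (-p) = (\<beta> * radial_fun K2 x) powr (-p)"
        by (simp add: powr_mult)
      also have "\<dots> \<le> radial_fun K1 x powr (-p)"
        using rr elim r1 p by (intro powr_mono2') auto
      finally show ?case .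
    qed
  qed
  finally have E2: "\<beta> powr (-p) * J2 \<le> I2" .
  have Lp': "L > 0" "M > 0" using Lp Mp by (auto simp: L_def M_def)
  have T1: "- (1 / L) * I1 \<le> - ln \<alpha> - (1 / L) * J1"
  proof -
    have "- (1 / L) * I1 \<le> - (1 / L) * (L * ln \<alpha> + J1)"
      using E1 Lp' by (intro mult_left_mono_neg) auto
    also have "\<dots> = - ln \<alpha> - (1 / L) * J1" using Lp' by (simp add: field_simps)
    finally show ?thesis .
  qed
  have pos: "0 < (1 / M) * (\<beta> powr (-p) * J2)" using Lp' J2p b by simp
  have le2: "(1 / M) * (\<beta> powr (-p) * J2) \<le> (1 / M) * I2"
    using E2 Lp' by (intro mult_left_mono) auto
  have "ln ((1 / M) * (\<beta> powr (-p) * J2)) \<le> ln ((1 / M) * I2)"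
    using pos le2 by (intro ln_mono) auto
  moreover have "ln ((1 / M) * (\<beta> powr (-p) * J2)) = - p * ln \<beta> + ln ((1 / M) * J2)"
    using Lp' J2p b by (simp add: ln_mult ln_powr ln_div)
  ultimately have "- p * ln \<beta> + ln ((1 / M) * J2) \<le> ln ((1 / M) * I2)" by simp
  then have "- (1 / p) * ln ((1 / M) * I2) \<le> - (1 / p) * (- p * ln \<beta> + ln ((1 / M) * J2))"
    using p by (intro mult_left_mono_neg) auto
  also have "\<dots> = ln \<beta> - (1 / p) * ln ((1 / M) * J2)" using p by (simp add: field_simps)
  finally have T2: "- (1 / p) * ln ((1 / M) * I2) \<le> ln \<beta> - (1 / p) * ln ((1 / M) * J2)" .
  show ?thesis
    unfolding Phi_radial[OF K1] Phi_radial[OF K2]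
    using T1 T2 unfolding L_def M_def I1_def I2_def J1_def J2_def by linarith
qed

lemma ln_ratio_bound:
  fixes e :: real assumes "0 < e" "e \<le> 1/2"
  shows "ln (1 + e) - ln (1 - e) \<le> 3 * e"
proof -
  have a: "ln (1 + e) \<le> e" using assms by (intro ln_add_one_self_le_self) auto
  have p: "0 < 1 / (1 - e)" using assms by simp
  have "ln (1 / (1 - e)) \<le> 1 / (1 - e) - 1" using ln_le_minus_one[OF p] .
  also have "1 / (1 - e) - 1 = e / (1 - e)" using assms by (simp add: field_simps)
  also have "e / (1 - e) \<le> 2 * e" using assms by (simp add: field_simps)
  finally have "ln (1 / (1 - e)) \<le> 2 * e" .
  moreover have "ln (1 / (1 - e)) = - ln (1 - e)" using assms by (simp add: ln_div)
  ultimately show ?thesis using a by linarith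
qed

lemma limit_body:
  fixes G :: "'a::euclidean_space \<Rightarrow> real"
  assumes rp: "rp > 0" and G: "\<forall>x\<in>sphere 0 1. rp \<le> G x \<and> G x \<le> 2"
  shows "convex_body0 {y. \<forall>x\<in>sphere 0 1. y \<bullet> x \<le> G x}"
    "\<forall>x\<in>sphere 0 1. support_fun {y. \<forall>x\<in>sphere 0 1. y \<bullet> x \<le> G x} x \<le> G x"
proof -
  define K where "K = {y. \<forall>x\<in>sphere (0::'a) 1. y \<bullet> x \<le> G x}"
  have eq: "K = (\<Inter>x\<in>sphere 0 1. {y. x \<bullet> y \<le> G x})" by (auto simp: K_def inner_commute)
  have cl: "closed K" unfolding eq by (intro closed_INT ballI closed_halfspace_le)
  have cv: "convex K" unfolding eq by (intro convex_INT ballI convex_halfspace_le)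
  have bd: "K \<subseteq> cball 0 2"
  proof
    fix y assume y: "y \<in> K"
    show "y \<in> cball 0 2"
    proof (cases "y = 0")
      case False
      then have u: "y /\<^sub>R norm y \<in> sphere 0 1" by simp
      have "y \<bullet> (y /\<^sub>R norm y) \<le> G (y /\<^sub>R norm y)"
        using y u unfolding K_def by blast
      moreover have "G (y /\<^sub>R norm y) \<le> 2" using G u by blast
      ultimately have "y \<bullet> (y /\<^sub>R norm y) \<le> G (y /\<^sub>R norm y)" "G (y /\<^sub>R norm y) \<le> 2" .
      moreover have "y \<bullet> (y /\<^sub>R norm y) = norm y" using False
        by (simp add: dot_square_norm power2_eq_square)
      ultimately show ?thesis by simp
    qed simp
  qed
  have cp: "compact K" using cl bd by (meson bounded_cball bounded_subset compact_eq_bounded_closed)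
  have ball: "ball 0 rp \<subseteq> K"
  proof
    fix y :: 'a assume y: "y \<in> ball 0 rp"
    have "\<forall>x\<in>sphere 0 1. y \<bullet> x \<le> G x"
    proof
      fix x :: 'a assume x: "x \<in> sphere 0 1"
      have "y \<bullet> x \<le> norm y * norm x" by (rule norm_cauchy_schwarz)
      then show "y \<bullet> x \<le> G x" using x y G by fastforce
    qed
    then show "y \<in> K" by (simp add: K_def)
  qed
  have "0 \<in> interior K" using ball rp mem_interior by blast
  then show cb: "convex_body0 {y. \<forall>x\<in>sphere 0 1. y \<bullet> x \<le> G x}"
    using cp cv by (simp add: convex_body0_def K_def)
  show "\<forall>x\<in>sphere 0 1. support_fun {y. \<forall>x\<in>sphere 0 1. y \<bullet> x \<le> G x} x \<le> G x"
  proof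
    fix x :: 'a assume x: "x \<in> sphere 0 1"
    obtain y where "y \<in> {y. \<forall>x\<in>sphere 0 1. y \<bullet> x \<le> G x}"
        "support_fun {y. \<forall>x\<in>sphere 0 1. y \<bullet> x \<le> G x} x = y \<bullet> x"
      using support_max(1)[OF cb_facts(1,4)[OF cb]] by blast
    then show "support_fun {y. \<forall>x\<in>sphere 0 1. y \<bullet> x \<le> G x} x \<le> G x" using x by auto
  qed
qed

theorem lemma5p2:
  fixes lam mu :: "'a::euclidean_space measure" and p :: real
  assumes "DIM('a) \<ge> 2"
    and "p > 0"
    and "sets lam = sets borel" and "sets mu = sets borel"
    and "finite_measure lam" and "finite_measure mu"
    and "emeasure lam (- sphere 0 1) = 0" and "emeasure mu (- sphere 0 1) = 0"
    and "absolutely_continuous sphere_measure lam"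
    and "\<And>A. openin (top_of_set (sphere 0 1)) A \<Longrightarrow> A \<noteq> {} \<Longrightarrow> emeasure lam A > 0"
    and "\<And>v. v \<in> sphere 0 1 \<Longrightarrow> emeasure mu {u \<in> sphere 0 1. u \<bullet> v < 0} > 0"
  shows "\<exists>K0. convex_body0 K0 \<and>
           (\<forall>K. convex_body0 K \<longrightarrow> Phi lam mu p (radial_fun K) \<le> Phi lam mu p (radial_fun K0))"
proof -
  note p = assms(2) and sl = assms(3) and sm = assms(4) and fl = assms(5) and fm = assms(6)
    and nl = assms(7) and nm = assms(8)
  obtain t c1 where t: "t > 0" "c1 > 0" "\<forall>z\<in>sphere 0 1. c1 \<le> measure lam {u \<in> sphere 0 1. t < u \<bullet> z}"
    using cap_lam[OF sl fl assms(10)] by blast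
  obtain d c2 where d: "d > 0" "c2 > 0" "\<forall>z\<in>sphere 0 1. c2 \<le> measure mu {u \<in> sphere 0 1. d < u \<bullet> z}"
    using cap_mu[OF sm fm assms(11)] by blast
  obtain u0 :: 'a where u0: "u0 \<in> sphere 0 1" using exists_unit by blast
  define L where "L = total_mass lam"
  define M where "M = total_mass mu"
  have "c1 \<le> L" unfolding L_def total_mass_def
    using t(3) u0 finite_measure.bounded_measure[OF fl] by (meson order.trans)
  then have Lp: "L > 0" using t by linarith
  have "c2 \<le> M" unfolding M_def total_mass_def
    using d(3) u0 finite_measure.bounded_measure[OF fm] by (meson order.trans)
  then have Mp: "M > 0" using d by linarith
  define \<theta> where "\<theta> = c1 / L"
  have th: "\<theta> > 0" using Lp t by (simp add: \<theta>_def)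
  define C' where "C' = -(1/p) * ln (c2 / M) - ln d"
  define \<Phi> where "\<Phi> K = Phi lam mu p (radial_fun K)" for K :: "'a set"
  define C3 where "C3 = C' + \<bar>ln t\<bar> + \<theta> * \<bar>ln t\<bar>"
  have bound: "\<Phi> K \<le> C3 \<and> (support_fun K w0 < t * norm y0 \<longrightarrow>
       \<Phi> K \<le> C' - \<theta> * ln t + \<theta> * (ln (support_fun K w0) - ln (norm y0)))"
    if K: "convex_body0 K" and y0: "y0 \<in> K" "y0 \<noteq> 0" "\<forall>y\<in>K. norm y \<le> norm y0"
      and w0: "w0 \<in> sphere 0 1" "\<forall>x\<in>sphere 0 1. support_fun K w0 \<le> support_fun K x"
      "0 < support_fun K w0" "\<forall>x\<in>sphere 0 1. support_fun K x \<le> norm y0"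
    for K y0 w0
  proof -
    define r where "r = support_fun K w0"
    define R where "R = norm y0"
    have PB: "\<Phi> K \<le> C' + ln r - ln (min r (R * t)) - \<theta> * (ln (R * t) - ln (min r (R * t)))"
      using Phi_bound[OF sl sm fl fm nl nm p t(1,2,3) d(1,2,3) K y0(1,2) w0(1,2)]
      unfolding \<Phi>_def C'_def \<theta>_def r_def R_def L_def M_def by simp
    have R: "R > 0" using y0 by (simp add: R_def)
    have r: "r > 0" "r \<le> R" using w0 by (auto simp: r_def R_def)
    have lnRt: "ln (R * t) = ln R + ln t" using R t by (simp add: ln_mult)
    have lrR: "ln r \<le> ln R" using r by simp
    have thr: "\<theta> * (ln r - ln R) \<le> 0" using th lrR by (simp add: mult_nonneg_nonpos)
    have "\<theta> * (- ln t) \<le> \<theta> * \<bar>ln t\<bar>" using th by (intro mult_left_mono) auto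
    then have tht: "- \<theta> * ln t \<le> \<theta> * \<bar>ln t\<bar>" by simp
    have c1: "\<Phi> K \<le> C' - \<theta> * ln t + \<theta> * (ln r - ln R)" if "r \<le> R * t"
    proof -
      have "min r (R * t) = r" using that by simp
      then have "\<Phi> K \<le> C' - \<theta> * (ln R + ln t - ln r)" using PB lnRt by simp
      then show ?thesis by (simp add: algebra_simps)
    qed
    have c2: "\<Phi> K \<le> C' + ln r - ln R - ln t" if "\<not> r \<le> R * t"
    proof -
      have "min r (R * t) = R * t" using that by simp
      then show ?thesis using PB lnRt by simp
    qed
    have "\<Phi> K \<le> C3"
    proof (cases "r \<le> R * t")
      case True
      then show ?thesis using c1 thr tht unfolding C3_def by linarith
    next
      case False
      then show ?thesis using c2 lrR th unfolding C3_def
        by (smt (verit) mult_nonneg_nonneg abs_ge_self abs_ge_minus_self)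
    qed
    moreover have "r < t * R \<longrightarrow> \<Phi> K \<le> C' - \<theta> * ln t + \<theta> * (ln r - ln R)"
      using c1 by (simp add: mult.commute)
    ultimately show ?thesis by (simp add: r_def R_def)
  qed
  define Vals where "Vals = \<Phi> ` {K. convex_body0 K}"
  have cb1: "convex_body0 (cball (0::'a) 1)"
    by (simp add: convex_body0_def)
  have ne: "Vals \<noteq> {}" using cb1 by (auto simp: Vals_def)
  have bdd: "bdd_above Vals"
  proof (rule bdd_aboveI)
    fix v assume "v \<in> Vals"
    then obtain K where K: "convex_body0 K" "v = \<Phi> K" by (auto simp: Vals_def)
    then show "v \<le> C3" using body_data[OF K(1)] bound[OF K(1)] by blast
  qed
  define s where "s = Sup Vals"
  have upper: "\<Phi> K \<le> s" if "convex_body0 K" for K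
    unfolding s_def using that bdd by (intro cSup_upper) (auto simp: Vals_def)
  have "\<exists>K. convex_body0 K \<and> s - 1 / real (Suc n) < \<Phi> K" for n
  proof -
    have "s - 1 / real (Suc n) < s" by simp
    then obtain v where "v \<in> Vals" "s - 1 / real (Suc n) < v"
      using less_cSup_iff[OF ne bdd] unfolding s_def by blast
    then show ?thesis by (auto simp: Vals_def)
  qed
  then obtain Ks where Ks: "\<And>n. convex_body0 (Ks n)" "\<And>n. s - 1 / real (Suc n) < \<Phi> (Ks n)"
    by metis
  obtain Y W where YW: "\<And>n. Y n \<in> Ks n \<and> Y n \<noteq> 0 \<and> (\<forall>y\<in>Ks n. norm y \<le> norm (Y n)) \<and> W n \<in> sphere 0 1
     \<and> (\<forall>x\<in>sphere 0 1. support_fun (Ks n) (W n) \<le> support_fun (Ks n) x) \<and> 0 < support_fun (Ks n) (W n)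
     \<and> (\<forall>x\<in>sphere 0 1. support_fun (Ks n) x \<le> norm (Y n))"
    using body_data[OF Ks(1)] by metis
  define R where "R n = norm (Y n)" for n
  have Rp: "R n > 0" for n using YW[of n] by (simp add: R_def)
  define rs where "rs = min t (exp ((s - 1 - C' + \<theta> * ln t) / \<theta>))"
  have rs: "rs > 0" "rs \<le> t" using t by (auto simp: rs_def)
  have rat: "rs * R n \<le> support_fun (Ks n) x" if x: "x \<in> sphere 0 1" for n x
  proof -
    have "rs * R n \<le> support_fun (Ks n) (W n)"
    proof (rule ccontr)
      assume "\<not> ?thesis"
      then have lt: "support_fun (Ks n) (W n) < rs * R n" by simp
      have "rs * R n \<le> t * R n" using rs Rp[of n] by (intro mult_right_mono) auto
      then have "support_fun (Ks n) (W n) < t * norm (Y n)"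
        using lt by (simp add: R_def)
      then have B: "\<Phi> (Ks n) \<le> C' - \<theta> * ln t + \<theta> * (ln (support_fun (Ks n) (W n)) - ln (norm (Y n)))"
        using bound[OF Ks(1)] YW[of n] by blast
      have q: "support_fun (Ks n) (W n) / R n < rs" using lt Rp[of n] by (simp add: field_simps)
      have "ln (support_fun (Ks n) (W n)) - ln (norm (Y n)) = ln (support_fun (Ks n) (W n) / R n)"
        using YW[of n] Rp[of n] by (simp add: ln_div R_def)
      also have "\<dots> < ln rs" using q YW[of n] Rp[of n] rs(1) by (intro ln_less_cancel_iff[THEN iffD2]) auto
      also have "ln rs \<le> (s - 1 - C' + \<theta> * ln t) / \<theta>"
      proof -
        have "rs \<le> exp ((s - 1 - C' + \<theta> * ln t) / \<theta>)" unfolding rs_def by (rule min.cobounded2)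
        then have "ln rs \<le> ln (exp ((s - 1 - C' + \<theta> * ln t) / \<theta>))" using rs(1) by (rule ln_mono)
        then show ?thesis by simp
      qed
      finally have "\<theta> * (ln (support_fun (Ks n) (W n)) - ln (norm (Y n))) < \<theta> * ((s - 1 - C' + \<theta> * ln t) / \<theta>)"
        by (rule mult_strict_left_mono[OF _ th])
      also have "\<dots> = s - 1 - C' + \<theta> * ln t" using th by simp
      finally have "\<Phi> (Ks n) < s - 1" using B by linarith
      moreover have "s - 1 \<le> s - 1 / real (Suc n)" by (simp add: field_simps)
      ultimately show False using Ks(2)[of n] by linarith
    qed
    then show ?thesis using YW[of n] x by (meson order.trans)
  qed
  define g where "g n x = support_fun (Ks n) x / R n" for n x
  have gb: "rs \<le> g n x \<and> g n x \<le> 1" if x: "x \<in> sphere 0 1" for n x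
  proof -
    have "rs * R n \<le> support_fun (Ks n) x" using rat[OF x] .
    then have 1: "rs \<le> g n x" using Rp[of n] by (simp add: g_def pos_le_divide_eq)
    have "support_fun (Ks n) x \<le> R n" using YW[of n] x by (simp add: R_def)
    then have 2: "g n x \<le> 1" using Rp[of n] by (simp add: g_def pos_divide_le_eq)
    show ?thesis using 1 2 by simp
  qed
  have glip: "\<bar>g n x - g n y\<bar> \<le> norm (x - y)" for n x y
  proof -
    have sub: "Ks n \<subseteq> cball 0 (R n)" using YW[of n] by (auto simp: R_def)
    have "\<bar>support_fun (Ks n) x - support_fun (Ks n) y\<bar> \<le> R n * norm (x - y)"
      by (rule support_abs_lip[OF cb_facts(1,4)[OF Ks(1)] sub])
    moreover have "g n x - g n y = (support_fun (Ks n) x - support_fun (Ks n) y) / R n"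
      by (simp add: g_def diff_divide_distrib)
    ultimately show ?thesis using Rp[of n] by (simp add: abs_div pos_divide_le_eq mult.commute)
  qed
  obtain G k where G: "continuous_on (sphere 0 1) G" "strict_mono (k :: nat \<Rightarrow> nat)"
      "\<And>e. 0 < e \<Longrightarrow> \<exists>N. \<forall>n x. n \<ge> N \<and> x \<in> sphere 0 1 \<longrightarrow> norm (g (k n) x - G x) < e"
  proof (rule Arzela_Ascoli[where \<F>=g and M=1, OF compact_sphere])
    show "norm (g n x) \<le> 1" if "x \<in> sphere 0 1" for n x using gb[OF that, of n] rs by simp
    show "\<exists>d>0. \<forall>n y. y \<in> sphere 0 1 \<and> norm (x - y) < d \<longrightarrow> norm (g n x - g n y) < e"
      if "x \<in> sphere 0 1" "0 < e" for x e
      using that glip by (intro exI[of _ e]) (auto intro: order.strict_trans1)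
  qed blast
  define rp where "rp = rs / 2"
  have rp: "rp > 0" using rs by (simp add: rp_def)
  have Gb: "\<forall>x\<in>sphere 0 1. rp \<le> G x \<and> G x \<le> 2"
  proof -
    obtain N where N: "\<forall>n x. n \<ge> N \<and> x \<in> sphere 0 1 \<longrightarrow> norm (g (k n) x - G x) < min rp 1"
      using G(3)[of "min rp 1"] rp by auto
    show ?thesis
    proof
      fix x :: 'a assume x: "x \<in> sphere 0 1"
      have "\<bar>g (k N) x - G x\<bar> < min rp 1" using N x by auto
      then have "g (k N) x - G x < rp" "G x - g (k N) x < 1" by (auto simp: abs_less_iff)
      moreover have "rs \<le> g (k N) x" "g (k N) x \<le> 1" using gb[OF x, of "k N"] by auto
      ultimately show "rp \<le> G x \<and> G x \<le> 2" by (simp add: rp_def)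
    qed
  qed
  define Kinf where "Kinf = {y. \<forall>x\<in>sphere (0::'a) 1. y \<bullet> x \<le> G x}"
  have cbI: "convex_body0 Kinf" unfolding Kinf_def by (rule limit_body(1)[OF rp Gb])
  have hle: "\<forall>x\<in>sphere 0 1. support_fun Kinf x \<le> G x" unfolding Kinf_def by (rule limit_body(2)[OF rp Gb])
  have est: "s \<le> \<Phi> Kinf + 4 * \<epsilon>" if e: "0 < \<epsilon>" "\<epsilon> \<le> 1/2" for \<epsilon>
  proof -
    obtain N where N: "\<forall>n x. n \<ge> N \<and> x \<in> sphere 0 1 \<longrightarrow> norm (g (k n) x - G x) < \<epsilon> * rp"
      using G(3)[of "\<epsilon> * rp"] rp e by auto
    define n where "n = N + nat \<lceil>1/\<epsilon>\<rceil>"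
    define j where "j = k n"
    have "n \<le> j" unfolding j_def using seq_suble[OF G(2)] .
    have "1/\<epsilon> \<le> real (nat \<lceil>1/\<epsilon>\<rceil>)" by (rule real_nat_ceiling_ge)
    also have "\<dots> \<le> real n" by (simp add: n_def)
    also have "\<dots> \<le> real (Suc j)" using \<open>n \<le> j\<close> by simp
    finally have "1/\<epsilon> \<le> real (Suc j)" .
    then have "1 \<le> \<epsilon> * real (Suc j)" using e by (simp add: divide_le_eq mult.commute)
    then have ej: "1 / real (Suc j) \<le> \<epsilon>" by (simp add: divide_le_eq mult.commute)
    have close: "\<bar>g j x - G x\<bar> < \<epsilon> * rp" if "x \<in> sphere 0 1" for x
      using N that by (auto simp: j_def n_def)
    have hj: "support_fun (Ks j) x = R j * g j x" for x using Rp[of j] by (simp add: g_def)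
    have A: "\<forall>x\<in>sphere 0 1. ((1 - \<epsilon>) * R j) * support_fun Kinf x \<le> support_fun (Ks j) x"
    proof
      fix x :: 'a assume x: "x \<in> sphere 0 1"
      have 1: "G x - \<epsilon> * rp < g j x" using close[OF x] by (simp add: abs_less_iff)
      have 2: "\<epsilon> * rp \<le> \<epsilon> * G x" using Gb x e by (intro mult_left_mono) auto
      have 3: "(1 - \<epsilon>) * support_fun Kinf x \<le> (1 - \<epsilon>) * G x" using hle x e by (intro mult_left_mono) auto
      have 4: "(1 - \<epsilon>) * G x = G x - \<epsilon> * G x" by (simp add: algebra_simps)
      have "(1 - \<epsilon>) * support_fun Kinf x \<le> g j x" using 1 2 3 4 by linarith
      then have "R j * ((1 - \<epsilon>) * support_fun Kinf x) \<le> R j * g j x"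
        using Rp[of j] by (intro mult_left_mono) auto
      then show "((1 - \<epsilon>) * R j) * support_fun Kinf x \<le> support_fun (Ks j) x"
        by (simp add: hj algebra_simps)
    qed
    have B: "\<forall>u\<in>sphere 0 1. radial_fun (Ks j) u \<le> ((1 + \<epsilon>) * R j) * radial_fun Kinf u"
    proof
      fix u :: 'a assume u: "u \<in> sphere 0 1"
      then have u0: "u \<noteq> 0" by auto
      define a where "a = radial_fun (Ks j) u"
      define \<beta> where "\<beta> = (1 + \<epsilon>) * R j"
      have a: "a > 0" "a *\<^sub>R u \<in> Ks j" using radial_props(1,2)[OF Ks(1) u0] by (auto simp: a_def)
      have b: "\<beta> > 0" using e Rp[of j] by (simp add: \<beta>_def)
      have "(a / \<beta>) *\<^sub>R u \<in> Kinf" unfolding Kinf_def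
      proof (intro CollectI ballI)
        fix x :: 'a assume x: "x \<in> sphere 0 1"
        have "(a *\<^sub>R u) \<bullet> x \<le> support_fun (Ks j) x"
          by (rule support_max(2)[OF cb_facts(1,4)[OF Ks(1)] a(2)])
        also have "\<dots> = R j * g j x" by (rule hj)
        also have "\<dots> \<le> R j * ((1 + \<epsilon>) * G x)"
        proof -
          have 1: "g j x < G x + \<epsilon> * rp" using close[OF x] by (simp add: abs_less_iff)
          have 2: "\<epsilon> * rp \<le> \<epsilon> * G x" using Gb x e by (intro mult_left_mono) auto
          have "g j x \<le> (1 + \<epsilon>) * G x" using 1 2 by (simp add: algebra_simps)
          then show ?thesis using Rp[of j] by (intro mult_left_mono) auto
        qed
        also have "\<dots> = \<beta> * G x" by (simp add: \<beta>_def)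
        finally have "(a *\<^sub>R u) \<bullet> x \<le> \<beta> * G x" .
        then show "(a / \<beta>) *\<^sub>R u \<bullet> x \<le> G x" using b by (simp add: pos_divide_le_eq mult.commute)
      qed
      then have "a / \<beta> \<le> radial_fun Kinf u" using radial_props(3)[OF cbI u0, of "a / \<beta>"] a b by simp
      then show "radial_fun (Ks j) u \<le> ((1 + \<epsilon>) * R j) * radial_fun Kinf u"
        using b by (simp add: a_def \<beta>_def pos_divide_le_eq mult.commute)
    qed
    have al: "(1 - \<epsilon>) * R j > 0" using e Rp[of j] by simp
    have be: "(1 + \<epsilon>) * R j > 0" using e Rp[of j] by simp
    have Lp': "total_mass lam > 0" using Lp by (simp add: L_def)
    have Mp': "total_mass mu > 0" using Mp by (simp add: M_def)
    have cmp: "\<Phi> (Ks j) \<le> \<Phi> Kinf - ln ((1 - \<epsilon>) * R j) + ln ((1 + \<epsilon>) * R j)"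
      unfolding \<Phi>_def by (rule Phi_compare[OF sl sm fl fm nl nm p Lp' Mp' Ks(1) cbI al be A B])
    have "- ln ((1 - \<epsilon>) * R j) + ln ((1 + \<epsilon>) * R j) = ln (1 + \<epsilon>) - ln (1 - \<epsilon>)"
      using e Rp[of j] by (simp add: ln_mult)
    then have "\<Phi> (Ks j) \<le> \<Phi> Kinf + 3 * \<epsilon>" using cmp ln_ratio_bound[OF e] by linarith
    then show ?thesis using Ks(2)[of j] ej e by linarith
  qed
  have fin: "s \<le> \<Phi> Kinf"
  proof (rule ccontr)
    assume "\<not> s \<le> \<Phi> Kinf"
    then have pos: "0 < s - \<Phi> Kinf" by simp
    define \<epsilon> where "\<epsilon> = min (1/2) ((s - \<Phi> Kinf) / 8)"
    have "0 < \<epsilon>" "\<epsilon> \<le> 1/2" using pos by (auto simp: \<epsilon>_def)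
    then have "s \<le> \<Phi> Kinf + 4 * \<epsilon>" by (rule est)
    moreover have "\<epsilon> \<le> (s - \<Phi> Kinf) / 8" unfolding \<epsilon>_def by (rule min.cobounded2)
    ultimately have "s \<le> \<Phi> Kinf + 4 * ((s - \<Phi> Kinf) / 8)" by linarith
    then show False using pos by (simp add: field_simps)
  qed
  show ?thesis
  proof (intro exI[of _ Kinf] conjI allI impI)
    show "convex_body0 Kinf" by (rule cbI)
    fix K :: "'a set" assume "convex_body0 K"
    then have "\<Phi> K \<le> s" by (rule upper)
    then show "Phi lam mu p (radial_fun K) \<le> Phi lam mu p (radial_fun Kinf)"
      using fin by (simp add: \<Phi>_def)
  qed
qed

end
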